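(* Let $F\in\mathbb{C}[x]$ be a polynomial of degree $n\ge 2$, and let $\Delta$ be a disk in $\mathbb{C}$ that is $(\frac{1}{16n},16n^4)$-isolating for a set of $k$ roots of $F$ (counted with multiplicity). Then $T_k(\Delta,\frac32,F)$ holds.
   Context: $\Delta(m,r)$ denotes the open disk with center $m$ and radius $r>0$, and $\lambda\cdot\Delta(m,r):=\Delta(m,\lambda r)$. For $0<\rho_1\le 1\le\rho_2$ and a set $S$ of roots of $F$ (counted with multiplicity), a disk $\Delta$ is $(\rho_1,\rho_2)$-isolating for $S$ if $\rho_1\cdot\Delta$ contains exactly the roots in $S$ (with multiplicity) and $\rho_2\cdot\Delta\setminus\rho_1\cdot\Delta$ contains no root of $F$. The predicate $T_k(\Delta(m,r),K,F)$ holds iff $\left|\frac{F^{(k)}(m) r^k}{k!}\right|>K\sum_{i\neq k,\,0\le i\le n}\left|\frac{F^{(i)}(m)r^i}{i!}\right|$. *)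

theory Defs
  imports "HOL-Analysis.Analysis" "HOL-Computational_Algebra.Polynomial"
begin

definition root_count :: "complex poly \<Rightarrow> complex set \<Rightarrow> nat" where
  "root_count F A = (\<Sum>z\<in>{z\<in>A. poly F z = 0}. order z F)"

text \<open>The open disk Delta(m, r) scaled by lambda is ball m (lambda * r).\<close>
definition isolating :: "real \<Rightarrow> real \<Rightarrow> complex poly \<Rightarrow> complex \<Rightarrow> real \<Rightarrow> nat \<Rightarrow> bool" where
  "isolating rho1 rho2 F m r k \<longleftrightarrow>
     root_count F (ball m (rho1 * r)) = k \<and>
     (\<forall>z \<in> ball m (rho2 * r) - ball m (rho1 * r). poly F z \<noteq> 0)"

definition T_test :: "nat \<Rightarrow> complex \<Rightarrow> real \<Rightarrow> real \<Rightarrow> complex poly \<Rightarrow> bool" where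
  "T_test k m r K F \<longleftrightarrow>
     norm (poly ((pderiv ^^ k) F) m * of_real (r ^ k) / of_nat (fact k))
       > K * (\<Sum>i\<in>{0..degree F} - {k}.
                norm (poly ((pderiv ^^ i) F) m * of_real (r ^ i) / of_nat (fact i)))"

end

theory Submission imports Defs "HOL-Computational_Algebra.Fundamental_Theorem_Algebra" begin
definition l1 :: "complex poly \<Rightarrow> real" where
  "l1 p = (\<Sum>i\<le>degree p. norm (coeff p i))"

lemma l1_eq: "degree p \<le> N \<Longrightarrow> l1 p = (\<Sum>i\<le>N. norm (coeff p i))"
  unfolding l1_def
  by (rule sum.mono_neutral_left) (auto simp: coeff_eq_0)

lemma l1_ge: "(\<Sum>i\<le>N. norm (coeff p i)) \<le> l1 p"
proof (cases "degree p \<le> N")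
  case True then show ?thesis by (simp add: l1_eq)
next
  case False
  then show ?thesis unfolding l1_def
    by (intro sum_mono2) auto
qed

lemma l1_coeff: "norm (coeff p i) \<le> l1 p"
proof -
  have "norm (coeff p i) \<le> (\<Sum>j\<le>i. norm (coeff p j))"
    by (rule member_le_sum) auto
  then show ?thesis using l1_ge[of p i] by linarith
qed

lemma l1_nonneg: "0 \<le> l1 p" unfolding l1_def by (auto intro: sum_nonneg)

lemma l1_0 [simp]: "l1 0 = 0" by (simp add: l1_def)

lemma l1_pCons: "l1 (pCons a p) = norm a + l1 p"
proof -
  have "l1 (pCons a p) = (\<Sum>i\<le>Suc (degree p). norm (coeff (pCons a p) i))"
    by (rule l1_eq) (simp add: degree_pCons_le)
  also have "\<dots> = norm a + (\<Sum>i\<le>degree p. norm (coeff p i))"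
    by (subst sum.atMost_Suc_shift) simp
  finally show ?thesis by (simp add: l1_def)
qed

lemma l1_add: "l1 (p + q) \<le> l1 p + l1 q"
proof -
  let ?N = "max (degree p) (degree q)"
  have "l1 (p + q) = (\<Sum>i\<le>?N. norm (coeff (p + q) i))"
    by (rule l1_eq) (rule degree_add_le_max)
  also have "\<dots> \<le> (\<Sum>i\<le>?N. norm (coeff p i) + norm (coeff q i))"
    by (intro sum_mono) (simp add: norm_triangle_ineq)
  also have "\<dots> = l1 p + l1 q"
    by (simp add: sum.distrib l1_eq[symmetric])
  finally show ?thesis .
qed

lemma l1_smult: "l1 (smult c p) = norm c * l1 p"
proof -
  have "l1 (smult c p) = (\<Sum>i\<le>degree p. norm (coeff (smult c p) i))"
    by (rule l1_eq) simp
  also have "\<dots> = norm c * l1 p"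
    by (simp add: l1_def sum_distrib_left norm_mult)
  finally show ?thesis .
qed

lemma l1_mult: "l1 (p * q) \<le> l1 p * l1 q"
proof (induction p)
  case 0
  then show ?case by simp
next
  case (pCons a p)
  have "l1 (pCons a p * q) = l1 (smult a q + pCons 0 (p * q))" by simp
  also have "\<dots> \<le> norm a * l1 q + l1 (p * q)"
    using l1_add[of "smult a q" "pCons 0 (p * q)"] by (simp add: l1_smult l1_pCons)
  also have "\<dots> \<le> norm a * l1 q + l1 p * l1 q" using pCons.IH by simp
  also have "\<dots> = l1 (pCons a p) * l1 q" by (simp add: l1_pCons algebra_simps)
  finally show ?case .
qed

lemma l1_monom: "l1 (monom c s) = norm c"
proof -
  have "l1 (monom c s) = (\<Sum>i\<le>s. norm (coeff (monom c s) i))"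
    by (rule l1_eq) (simp add: degree_monom_le)
  also have "\<dots> = (\<Sum>i\<le>s. if i = s then norm c else 0)"
    by (intro sum.cong) (auto simp: coeff_monom)
  finally show ?thesis by simp
qed

lemma hpd_pcompose:
  "(pderiv ^^ i) (pcompose F [:m, r:]) = smult (r ^ i) (pcompose ((pderiv ^^ i) F) [:m, r:])"
  for F :: "complex poly"
proof (induction i)
  case 0 then show ?case by simp
next
  case (Suc i)
  show ?case using Suc
    by (simp add: pderiv_pcompose pderiv_smult pderiv_pCons mult.commute)
qed

lemma taylor_coeff:
  fixes F :: "complex poly" and r :: real
  shows "coeff (pcompose F [:m, of_real r:]) i = poly ((pderiv ^^ i) F) m * of_real (r ^ i) / of_nat (fact i)"
proof -
  let ?H = "pcompose F [:m, of_real r:]"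
  have "coeff ((pderiv ^^ i) ?H) 0 = pochhammer (of_nat (Suc 0)) i * coeff ?H i"
    using coeff_higher_pderiv[of i ?H 0] by simp
  also have "pochhammer (of_nat (Suc 0)) i = (fact i :: complex)"
    by (simp add: pochhammer_fact)
  finally have 1: "coeff ((pderiv ^^ i) ?H) 0 = fact i * coeff ?H i" .
  have 2: "coeff ((pderiv ^^ i) ?H) 0 = of_real r ^ i * poly ((pderiv ^^ i) F) m"
    by (simp add: hpd_pcompose poly_0_coeff_0[symmetric] poly_pcompose)
  from 1 2 show ?thesis
    by (simp add: field_simps)
qed

lemma pow_bound:
  fixes x :: real
  assumes "0 \<le> x" "real s * x \<le> 1/2"
  shows "(1 + x) ^ s \<le> 1 + 2 * real s * x"
  using assms(2)
proof (induction s)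
  case 0 then show ?case by simp
next
  case (Suc s)
  have h: "real s * x \<le> 1/2" using Suc.prems assms(1) by (simp add: algebra_simps)
  have "(1 + x) ^ Suc s = (1 + x) * (1 + x) ^ s" by simp
  also have "\<dots> \<le> (1 + x) * (1 + 2 * real s * x)"
    using Suc.IH[OF h] assms(1) by (intro mult_left_mono) auto
  also have "\<dots> = 1 + (2 * real s + 1) * x + 2 * (real s * x) * x" by (simp add: algebra_simps)
  also have "\<dots> \<le> 1 + (2 * real s + 1) * x + 1 * x"
    using h assms(1) by (intro add_left_mono mult_right_mono) auto
  also have "\<dots> = 1 + 2 * real (Suc s) * x" by (simp add: algebra_simps)
  finally show ?case .
qed

lemma l1_lin: "l1 [:a, 1:] = norm a + 1"
  by (simp add: l1_pCons del: pCons_one)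

lemma small_prod:
  fixes w :: "'a \<Rightarrow> complex"
  assumes "\<forall>z\<in>#M. norm (w z) \<le> e" "0 \<le> e"
  shows "\<exists>P'. (\<Prod>z\<in>#M. [:-w z, 1:]) = monom 1 (size M) + P' \<and>
           (\<forall>i\<ge>size M. coeff P' i = 0) \<and> l1 P' \<le> (1+e)^size M - 1"
  using assms(1)
proof (induction M)
  case empty
  show ?case by (rule exI[of _ 0]) (simp add: monom_0 one_pCons)
next
  case (add x M)
  then obtain P' where P': "(\<Prod>z\<in>#M. [:-w z, 1:]) = monom 1 (size M) + P'"
    "\<forall>i\<ge>size M. coeff P' i = 0" "l1 P' \<le> (1+e)^size M - 1" by auto
  have wx: "norm (w x) \<le> e" using add.prems by simp
  define P'' where "P'' = smult (- w x) (monom 1 (size M)) + [:-w x, 1:] * P'"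
  have eq: "(\<Prod>z\<in>#add_mset x M. [:-w z, 1:]) = monom 1 (size (add_mset x M)) + P''"
    using P'(1) by (simp add: P''_def monom_Suc algebra_simps smult_add_right)
  have co: "\<forall>i\<ge>size (add_mset x M). coeff P'' i = 0"
  proof (intro allI impI)
    fix i assume i: "size (add_mset x M) \<le> i"
    then obtain j where j: "i = Suc j" "size M \<le> j" by (cases i) auto
    show "coeff P'' i = 0" using P'(2) j by (simp add: P''_def coeff_monom)
  qed
  have h1: "l1 ([:-w x, 1:] * P') \<le> (norm (w x) + 1) * l1 P'"
  proof -
    have "l1 ([:-w x, 1:] * P') \<le> l1 [:-w x, 1:] * l1 P'" by (rule l1_mult)
    also have "l1 [:-w x, 1:] = norm (w x) + 1" using l1_lin[of "-w x"] by simp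
    finally show ?thesis .
  qed
  have h2: "l1 (smult (- w x) (monom 1 (size M))) = norm (w x)"
    by (simp only: l1_smult l1_monom) simp
  have "l1 P'' \<le> l1 (smult (- w x) (monom 1 (size M))) + l1 ([:-w x, 1:] * P')"
    unfolding P''_def by (rule l1_add)
  also have "\<dots> \<le> norm (w x) + (norm (w x) + 1) * l1 P'"
    using h1 h2 by linarith
  also have "\<dots> \<le> e + (e + 1) * ((1+e)^size M - 1)"
    using wx P'(3) l1_nonneg[of P'] assms(2)
    by (intro add_mono mult_mono) auto
  also have "\<dots> = (1+e)^size (add_mset x M) - 1" by (simp add: algebra_simps)
  finally show ?case using eq co by blast
qed

lemma large_prod:
  fixes w :: "'a \<Rightarrow> complex"
  assumes "\<forall>z\<in>#M. w z \<noteq> 0 \<and> norm (1 / w z) \<le> d" "0 \<le> d"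
  shows "\<exists>c Q'. c \<noteq> 0 \<and> (\<Prod>z\<in>#M. [:-w z, 1:]) = smult c (1 + Q') \<and>
           coeff Q' 0 = 0 \<and> l1 Q' \<le> (1+d)^size M - 1"
  using assms(1)
proof (induction M)
  case empty
  show ?case by (rule exI[of _ 1], rule exI[of _ 0]) simp
next
  case (add x M)
  then obtain c Q' where Q': "c \<noteq> 0" "(\<Prod>z\<in>#M. [:-w z, 1:]) = smult c (1 + Q')"
    "coeff Q' 0 = 0" "l1 Q' \<le> (1+d)^size M - 1" by auto
  have wx: "w x \<noteq> 0" "norm (1 / w x) \<le> d" using add.prems by auto
  define Q'' where "Q'' = [:0, - 1 / w x:] + [:1, - 1 / w x:] * Q'"
  have lin: "[:-w x, 1:] = smult (- w x) [:1, - 1 / w x:]" using wx by simp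
  have eq: "(\<Prod>z\<in>#add_mset x M. [:-w z, 1:]) = smult (- w x * c) (1 + Q'')"
  proof -
    have "(\<Prod>z\<in>#add_mset x M. [:-w z, 1:]) = [:-w x, 1:] * (\<Prod>z\<in>#M. [:-w z, 1:])"
      by simp
    also have "\<dots> = smult (- w x) [:1, - 1 / w x:] * smult c (1 + Q')"
      using Q'(2) lin by (simp only:)
    also have "\<dots> = smult (- w x * c) ([:1, - 1 / w x:] * (1 + Q'))"
      by (simp only: mult_smult_left mult_smult_right smult_smult mult.commute[of c])
    also have "[:1, - 1 / w x:] * (1 + Q') = 1 + Q''"
    proof -
      have o: "1 + [:0, - 1 / w x:] = [:1, - 1 / w x:]" by (simp add: one_pCons)
      show ?thesis unfolding Q''_def distrib_left mult_1_right add.assoc[symmetric] o ..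
    qed
    finally show ?thesis .
  qed
  have co: "coeff Q'' 0 = 0" using Q'(3) by (simp add: Q''_def)
  have "l1 Q'' \<le> l1 [:0, - 1 / w x:] + l1 ([:1, - 1 / w x:] * Q')"
    unfolding Q''_def by (rule l1_add)
  also have "\<dots> \<le> norm (1 / w x) + (1 + norm (1 / w x)) * l1 Q'"
    using l1_mult[of "[:1, - 1 / w x:]" Q'] by (simp add: l1_pCons norm_divide)
  also have "\<dots> \<le> d + (1 + d) * ((1+d)^size M - 1)"
    using wx Q'(4) l1_nonneg[of Q'] assms(2)
    by (intro add_mono mult_mono) auto
  also have "\<dots> = (1+d)^size (add_mset x M) - 1" by (simp add: algebra_simps)
  finally show ?case using eq co Q'(1) wx(1) by (intro exI[of _ "- w x * c"] exI[of _ Q'']) auto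
qed

lemma key:
  assumes P: "\<forall>i\<ge>k. coeff P' i = 0" and Q: "coeff Q' 0 = 0"
    and a: "l1 P' \<le> 1/8" and b: "l1 Q' \<le> 1/8" and C: "C \<noteq> 0"
  shows "norm (coeff (smult C ((monom 1 k + P') * (1 + Q'))) k) >
     3/2 * (\<Sum>i\<in>{0..n}-{k}. norm (coeff (smult C ((monom 1 k + P') * (1 + Q'))) i))"
proof -
  define E where "E = monom 1 k * Q' + P' + P' * Q'"
  have G: "(monom 1 k + P') * (1 + Q') = monom 1 k + E" by (simp add: E_def algebra_simps)
  have a0: "0 \<le> l1 P'" "0 \<le> l1 Q'" by (rule l1_nonneg)+
  have ab: "l1 P' * l1 Q' \<le> 1/64"
    using mult_mono[OF a b] a0 by simp
  have Ek: "coeff E k = coeff (P' * Q') k"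
    using P Q coeff_monom_mult[of 1 k Q' k] by (simp add: E_def)
  have ck: "norm (coeff (monom 1 k + E) k) \<ge> 1 - l1 P' * l1 Q'"
  proof -
    have "norm (coeff (P' * Q') k) \<le> l1 P' * l1 Q'"
      using l1_coeff[of "P' * Q'" k] l1_mult[of P' Q'] by linarith
    moreover have "norm (1 + coeff E k) \<ge> 1 - norm (coeff E k)"
      using norm_triangle_ineq2[of 1 "- coeff E k"] by simp
    ultimately show ?thesis using Ek by simp
  qed
  have "(\<Sum>i\<in>{0..n}-{k}. norm (coeff (monom 1 k + E) i)) = (\<Sum>i\<in>{0..n}-{k}. norm (coeff E i))"
    by (intro sum.cong) (auto simp: coeff_monom)
  also have "\<dots> \<le> (\<Sum>i\<le>n. norm (coeff E i))"
    by (intro sum_mono2) auto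
  also have "\<dots> \<le> l1 E" by (rule l1_ge)
  also have "\<dots> \<le> l1 (monom 1 k * Q') + l1 P' + l1 (P' * Q')"
    unfolding E_def using l1_add[of "monom 1 k * Q' + P'" "P' * Q'"] l1_add[of "monom 1 k * Q'" P'] by linarith
  also have "\<dots> \<le> l1 Q' + l1 P' + l1 P' * l1 Q'"
    using l1_mult[of "monom 1 k" Q'] l1_mult[of P' Q'] by (simp add: l1_monom)
  finally have s: "(\<Sum>i\<in>{0..n}-{k}. norm (coeff (monom 1 k + E) i)) \<le> l1 Q' + l1 P' + l1 P' * l1 Q'" .
  have main: "norm (coeff (monom 1 k + E) k) > 3/2 * (\<Sum>i\<in>{0..n}-{k}. norm (coeff (monom 1 k + E) i))"
    using ck s a b ab by linarith
  have "norm C > 0" using C by simp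
  show ?thesis unfolding G coeff_smult norm_mult sum_distrib_left[symmetric]
    using mult_strict_left_mono[OF main \<open>norm C > 0\<close>] by (simp add: algebra_simps)
qed

lemma pcompose_prod_mset: "pcompose (\<Prod>z\<in>#M. f z) q = (\<Prod>z\<in>#M. pcompose (f z) q)"
  by (induction M) (simp_all add: pcompose_1 pcompose_mult)

lemma prod_mset_smult: "(\<Prod>z\<in>#M. smult c (f z)) = smult (c ^ size M) (\<Prod>z\<in>#M. f z)"
  by (induction M) (simp_all add: mult_ac)

theorem corollary3p3:
  fixes F :: "complex poly" and m :: complex and r :: real and k n :: nat
  assumes "degree F = n" and "n \<ge> 2" and "r > 0"
    and "isolating (1 / (16 * real n)) (16 * real n ^ 4) F m r k"
  shows "T_test k m r (3/2) F"
proof -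
  define r1 where "r1 = 1 / (16 * real n) * r"
  define r2 where "r2 = 16 * real n ^ 4 * r"
  have F0: "F \<noteq> 0" using assms(1,2) by auto
  have rc: "root_count F (ball m r1) = k" and ann: "\<forall>z\<in>ball m r2 - ball m r1. poly F z \<noteq> 0"
    using assms(4) unfolding isolating_def r1_def r2_def by auto
  define R where "R = proots F"
  define RS where "RS = filter_mset (\<lambda>z. z \<in> ball m r1) R"
  define RL where "RL = filter_mset (\<lambda>z. z \<notin> ball m r1) R"
  have RSL: "R = RS + RL" unfolding RS_def RL_def by (rule multiset_partition)
  have szR: "size R = n" using size_proots_complex assms(1) R_def by simp
  have szS: "size RS = k"
  proof -
    have "size RS = sum (count RS) (set_mset RS)" by (rule size_multiset_overloaded_eq)
    also have "set_mset RS = {z \<in> ball m r1. poly F z = 0}" using F0 by (auto simp: RS_def R_def)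
    also have "sum (count RS) {z \<in> ball m r1. poly F z = 0} = root_count F (ball m r1)"
      unfolding root_count_def using F0 by (intro sum.cong) (auto simp: RS_def R_def)
    finally show ?thesis using rc by simp
  qed
  have kn: "k \<le> n" using szR szS RSL by (metis le_add1 size_union)
  have szL: "size RL = n - k" using RSL szR szS by (metis add_diff_cancel_left' size_union)
  define w where "w z = (z - m) / of_real r" for z
  have nge: "real n \<ge> 2" using assms(2) by simp
  define e where "e = 1 / (16 * real n)"
  have e0: "0 \<le> e" unfolding e_def by simp
  have smallS: "\<forall>z\<in>#RS. norm (w z) \<le> e"
  proof
    fix z assume "z \<in># RS"
    then have "dist m z < r1" by (simp add: RS_def)
    then have "norm (z - m) < e * r" by (simp add: r1_def e_def dist_norm norm_minus_commute)
    then show "norm (w z) \<le> e" using assms(3)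
      by (simp add: w_def norm_divide divide_le_eq)
  qed
  have largeL: "\<forall>z\<in>#RL. w z \<noteq> 0 \<and> norm (1 / w z) \<le> e"
  proof
    fix z assume z: "z \<in># RL"
    then have "poly F z = 0" "z \<notin> ball m r1" using F0 by (auto simp: RL_def R_def)
    with ann have "z \<notin> ball m r2" by blast
    then have d: "norm (z - m) \<ge> 16 * real n ^ 4 * r"
      by (simp add: r2_def dist_norm norm_minus_commute)
    have n4: "real n \<le> real n ^ 4" using nge by (simp add: power_increasing[of 1 4 "real n", simplified])
    have "16 * real n * r \<le> 16 * real n ^ 4 * r" using n4 assms(3) by simp
    with d have d2: "16 * real n * r \<le> norm (z - m)" by linarith
    have pos: "0 < 16 * real n * r" using nge assms(3) by simp
    have wz: "w z \<noteq> 0" using d2 pos assms(3) by (auto simp: w_def)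
    have "norm (1 / w z) = r / norm (z - m)" using assms(3) by (simp add: w_def norm_divide)
    also have "\<dots> \<le> r / (16 * real n * r)"
    proof -
      have nz: "0 < norm (z - m)" using d2 pos by linarith
      show ?thesis using d2 pos nz assms(3) by (intro divide_left_mono) auto
    qed
    also have "\<dots> = e" using assms(3) by (simp add: e_def)
    finally show "w z \<noteq> 0 \<and> norm (1 / w z) \<le> e" using wz by simp
  qed
  obtain P' where P': "(\<Prod>z\<in>#RS. [:-w z, 1:]) = monom 1 (size RS) + P'"
    "\<forall>i\<ge>size RS. coeff P' i = 0" "l1 P' \<le> (1+e)^size RS - 1"
    using small_prod[OF smallS e0] by blast
  obtain c Q' where Q': "c \<noteq> 0" "(\<Prod>z\<in>#RL. [:-w z, 1:]) = smult c (1 + Q')"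
    "coeff Q' 0 = 0" "l1 Q' \<le> (1+e)^size RL - 1"
    using large_prod[OF largeL e0] by blast
  have bnd: "(1+e)^s - 1 \<le> 1/8" if "s \<le> n" for s
  proof -
    have "real s * e \<le> real n * e" using that e0 by (intro mult_right_mono) auto
    also have "real n * e = 1/16" using nge by (simp add: e_def)
    finally have se: "real s * e \<le> 1/16" .
    have "(1+e)^s \<le> 1 + 2 * real s * e" using pow_bound[OF e0] se by simp
    then show ?thesis using se by simp
  qed
  have a: "l1 P' \<le> 1/8" using P'(3) bnd[OF kn] szS by simp
  have b: "l1 Q' \<le> 1/8" using Q'(4) bnd[of "n - k"] szL by simp
  define H where "H = pcompose F [:m, of_real r:]"
  define C where "C = lead_coeff F * of_real r ^ n * c"
  have C0: "C \<noteq> 0" using F0 Q'(1) assms(3) by (simp add: C_def)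
  have Hdec: "H = smult C ((monom 1 k + P') * (1 + Q'))"
  proof -
    have Fd: "F = smult (lead_coeff F) (\<Prod>z\<in>#R. [:-z,1:])"
      using complex_poly_decompose_multiset[of F] R_def by simp
    have "H = smult (lead_coeff F) (\<Prod>z\<in>#R. pcompose [:-z,1:] [:m, of_real r:])"
      unfolding H_def by (subst Fd) (simp only: pcompose_smult pcompose_prod_mset)
    also have "(\<Prod>z\<in>#R. pcompose [:-z,1:] [:m, of_real r:]) = (\<Prod>z\<in>#R. smult (of_real r) [:-w z,1:])"
      using assms(3) by (intro arg_cong[of _ _ prod_mset] image_mset_cong) (simp add: w_def pcompose_pCons field_simps)
    also have "\<dots> = smult (of_real r ^ n) (\<Prod>z\<in>#R. [:-w z,1:])"
      by (simp only: prod_mset_smult szR)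
    also have "(\<Prod>z\<in>#R. [:-w z,1:]) = (\<Prod>z\<in>#RS. [:-w z,1:]) * (\<Prod>z\<in>#RL. [:-w z,1:])"
      by (simp add: RSL)
    finally show ?thesis using P'(1) Q'(2) szS by (simp add: C_def mult_ac)
  qed
  have tc: "poly ((pderiv ^^ i) F) m * of_real (r ^ i) / of_nat (fact i) = coeff H i" for i
    unfolding H_def by (rule taylor_coeff[symmetric])
  show ?thesis
    unfolding T_test_def tc assms(1) Hdec
    using key[OF _ Q'(3) a b C0, of k n] P'(2) szS by simp
qed

end
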